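(* Let $\mathbb{K}=(G,M,I)$ be a finite formal context and let $\mathcal{I}_P=\bigcup_{B\in\mathcal{C}} pKey(B)$ be the set of all passkeys (of all closed itemsets) of $\mathbb{K}$. Then $\mathcal{I}_P$ is an order ideal of $(2^M,\subseteq)$: if $X\in\mathcal{I}_P$ and $Y\subseteq X$, then $Y\in\mathcal{I}_P$, i.e. $Y$ is a passkey of the closed itemset $Y''$.
   Context: A formal context is a triple $(G,M,I)$ with $I\subseteq G\times M$. For $A\subseteq G$, $A'=\{m\in M\mid \forall g\in A:(g,m)\in I\}$; for $B\subseteq M$, $B'=\{g\in G\mid \forall m\in B:(g,m)\in I\}$. An itemset $B\subseteq M$ is closed if $B''=B$; $\mathcal{C}$ denotes the set of all closed itemsets. For a closed itemset $B$, its equivalence class is $Equiv(B)=\{Y\subseteq B\mid Y'=B'\}$. A key of $B$ is an itemset $X\in Equiv(B)$ such that $Y'\neq X'$ for every proper subset $Y\subsetneq X$; $Key(B)$ is the set of keys of $B$. A passkey of $B$ is a key of $B$ of minimum cardinality among all keys of $B$; $pKey(B)=\{X\in Key(B)\mid |X|=\min_{Y\in Key(B)}|Y|\}$. An order ideal of a poset $(P,\le)$ is a subset $\mathcal{I}\subseteq P$ such that $x\in\mathcal{I}$ and $y\le x$ imply $y\in\mathcal{I}$. *)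

theory Defs
  imports Main
begin

definition ext :: "'g set \<Rightarrow> ('g \<times> 'm) set \<Rightarrow> 'm set \<Rightarrow> 'g set" where
  "ext G I B = {g \<in> G. \<forall>m\<in>B. (g, m) \<in> I}"

definition intt :: "'m set \<Rightarrow> ('g \<times> 'm) set \<Rightarrow> 'g set \<Rightarrow> 'm set" where
  "intt M I A = {m \<in> M. \<forall>g\<in>A. (g, m) \<in> I}"

definition closure :: "'g set \<Rightarrow> 'm set \<Rightarrow> ('g \<times> 'm) set \<Rightarrow> 'm set \<Rightarrow> 'm set" where
  "closure G M I B = intt M I (ext G I B)"

definition closed_itemset :: "'g set \<Rightarrow> 'm set \<Rightarrow> ('g \<times> 'm) set \<Rightarrow> 'm set \<Rightarrow> bool" where
  "closed_itemset G M I B \<longleftrightarrow> B \<subseteq> M \<and> closure G M I B = B"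

definition Equiv_cls :: "'g set \<Rightarrow> ('g \<times> 'm) set \<Rightarrow> 'm set \<Rightarrow> 'm set set" where
  "Equiv_cls G I B = {Y. Y \<subseteq> B \<and> ext G I Y = ext G I B}"

definition Key :: "'g set \<Rightarrow> ('g \<times> 'm) set \<Rightarrow> 'm set \<Rightarrow> 'm set set" where
  "Key G I B = {X. X \<in> Equiv_cls G I B \<and> (\<forall>Y. Y \<subset> X \<longrightarrow> ext G I Y \<noteq> ext G I X)}"

definition pKey :: "'g set \<Rightarrow> ('g \<times> 'm) set \<Rightarrow> 'm set \<Rightarrow> 'm set set" where
  "pKey G I B = {X \<in> Key G I B. card X = Min (card ` Key G I B)}"

definition passkeys :: "'g set \<Rightarrow> 'm set \<Rightarrow> ('g \<times> 'm) set \<Rightarrow> 'm set set" where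
  "passkeys G M I = (\<Union>B \<in> {B. closed_itemset G M I B}. pKey G I B)"

end

theory Submission
  imports Defs
begin

lemma ext_anti: "A \<subseteq> B \<Longrightarrow> ext G I B \<subseteq> ext G I A"
  unfolding ext_def by auto

lemma ext_Un: "ext G I (A \<union> B) = ext G I A \<inter> ext G I B"
  unfolding ext_def by auto

lemma sub_closure: "Y \<subseteq> M \<Longrightarrow> Y \<subseteq> closure G M I Y"
  unfolding closure_def ext_def intt_def by auto

lemma ext_closure: "Y \<subseteq> M \<Longrightarrow> ext G I (closure G M I Y) = ext G I Y"
proof
  assume "Y \<subseteq> M"
  then show "ext G I (closure G M I Y) \<subseteq> ext G I Y"
    by (rule ext_anti[OF sub_closure])
  show "ext G I Y \<subseteq> ext G I (closure G M I Y)"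
    unfolding closure_def ext_def intt_def by auto
qed

lemma closure_mono: "Y \<subseteq> X \<Longrightarrow> closure G M I Y \<subseteq> closure G M I X"
  unfolding closure_def intt_def using ext_anti[of Y X G I] by auto

lemma key_exists:
  "finite Z \<Longrightarrow> \<exists>W\<subseteq>Z. ext G I W = ext G I Z \<and> (\<forall>V. V \<subset> W \<longrightarrow> ext G I V \<noteq> ext G I W)"
proof (induction "card Z" arbitrary: Z rule: less_induct)
  case less
  show ?case
  proof (cases "\<forall>V. V \<subset> Z \<longrightarrow> ext G I V \<noteq> ext G I Z")
    case True then show ?thesis by blast
  next
    case False
    then obtain V where V: "V \<subset> Z" "ext G I V = ext G I Z" by blast
    have c: "card V < card Z" by (rule psubset_card_mono[OF less.prems V(1)])
    have f: "finite V" using V(1) less.prems by (meson finite_subset psubset_imp_subset)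
    have "\<exists>W\<subseteq>V. ext G I W = ext G I V \<and> (\<forall>U. U \<subset> W \<longrightarrow> ext G I U \<noteq> ext G I W)"
      by (rule less.hyps[OF c f])
    then obtain W where W: "W \<subseteq> V" "ext G I W = ext G I V"
      "\<forall>U. U \<subset> W \<longrightarrow> ext G I U \<noteq> ext G I W" by blast
    have "W \<subseteq> Z" using W(1) V(1) by blast
    moreover have "ext G I W = ext G I Z" using W(2) V(2) by (rule trans)
    ultimately show ?thesis using W(3) by blast
  qed
qed

theorem proposition2:
  fixes G :: "'g set" and M :: "'m set" and I :: "('g \<times> 'm) set"
  assumes "finite G" and "finite M" and "I \<subseteq> G \<times> M"
    and "X \<in> passkeys G M I" and "Y \<subseteq> X"
  shows "Y \<in> passkeys G M I \<and> Y \<in> pKey G I (closure G M I Y)"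
proof -
  from assms(4) obtain B where B: "closed_itemset G M I B" "X \<in> pKey G I B"
    unfolding passkeys_def by blast
  have BM: "B \<subseteq> M" "closure G M I B = B" using B(1) unfolding closed_itemset_def by auto
  have XK: "X \<in> Key G I B" and Xc: "card X = Min (card ` Key G I B)"
    using B(2) unfolding pKey_def by blast+
  have XB: "X \<subseteq> B" and eXB: "ext G I X = ext G I B"
    and Xmin: "\<And>V. V \<subset> X \<Longrightarrow> ext G I V \<noteq> ext G I X"
    using XK unfolding Key_def Equiv_cls_def by blast+
  have finB: "finite B" using BM assms(2) finite_subset by blast
  have finX: "finite X" using XB finB finite_subset by blast
  have finKB: "finite (Key G I B)"
    by (rule finite_subset[of _ "Pow B"]) (unfold Key_def Equiv_cls_def, blast, simp add: finB)
  have XminC: "\<And>K. K \<in> Key G I B \<Longrightarrow> card X \<le> card K"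
    using Xc finKB by simp
  have YM: "Y \<subseteq> M" using assms(5) XB BM by blast
  define C where "C = closure G M I Y"
  have CM: "C \<subseteq> M" unfolding C_def closure_def intt_def by auto
  have eC: "ext G I C = ext G I Y" unfolding C_def by (rule ext_closure[OF YM])
  have YC: "Y \<subseteq> C" unfolding C_def using sub_closure YM by blast
  have clX: "closure G M I X = B" using eXB BM unfolding closure_def by simp
  have CB: "C \<subseteq> B" unfolding C_def using closure_mono[OF assms(5)] clX by blast
  have finC: "finite C" using CM assms(2) finite_subset by blast
  have finKC: "finite (Key G I C)"
    by (rule finite_subset[of _ "Pow C"]) (unfold Key_def Equiv_cls_def, blast, simp add: finC)
  have eX: "ext G I X = ext G I Y \<inter> ext G I (X - Y)"
    using ext_Un[of G I Y "X - Y"] assms(5) by (simp add: Un_absorb1 Un_Diff_cancel)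
  have YK: "Y \<in> Key G I C"
    unfolding Key_def Equiv_cls_def
  proof (intro CollectI conjI allI impI)
    show "Y \<subseteq> C" by (rule YC)
    show "ext G I Y = ext G I C" using eC by simp
    fix V assume V: "V \<subset> Y"
    show "ext G I V \<noteq> ext G I Y"
    proof
      assume e: "ext G I V = ext G I Y"
      have "V \<union> (X - Y) \<subset> X" using V assms(5) by blast
      moreover have "ext G I (V \<union> (X - Y)) = ext G I X"
        by (simp add: ext_Un e eX)
      ultimately show False using Xmin by blast
    qed
  qed
  have Ymin: "card Y \<le> card K" if K: "K \<in> Key G I C" for K
  proof (rule ccontr)
    assume lt: "\<not> card Y \<le> card K"
    have KC: "K \<subseteq> C" and eK: "ext G I K = ext G I C"
      using K unfolding Key_def Equiv_cls_def by blast+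
    define Z where "Z = K \<union> (X - Y)"
    have finK: "finite K" using KC finC finite_subset by blast
    have finZ: "finite Z" unfolding Z_def using finK finX by blast
    have eZ: "ext G I Z = ext G I B"
      unfolding Z_def ext_Un eK eC using eX eXB by simp
    have ZB: "Z \<subseteq> B" unfolding Z_def using KC CB XB by blast
    have "card Z \<le> card K + card (X - Y)" unfolding Z_def by (rule card_Un_le)
    also have "\<dots> < card Y + card (X - Y)" using lt by simp
    also have "\<dots> = card X"
      using card_Diff_subset[of Y X] assms(5) finX finite_subset[OF assms(5) finX]
        card_mono[OF finX assms(5)] by simp
    finally have cZ: "card Z < card X" .
    obtain W where W: "W \<subseteq> Z" "ext G I W = ext G I Z"
      "\<forall>V. V \<subset> W \<longrightarrow> ext G I V \<noteq> ext G I W"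
      using key_exists[OF finZ, where G=G and I=I] by blast
    have "W \<in> Key G I B" unfolding Key_def Equiv_cls_def using W ZB eZ by blast
    hence "card X \<le> card W" by (rule XminC)
    moreover have "card W \<le> card Z" using W(1) finZ card_mono by blast
    ultimately show False using cZ by simp
  qed
  have "Min (card ` Key G I C) = card Y"
    using YK Ymin finKC by (intro Min_eqI) auto
  hence YP: "Y \<in> pKey G I C" unfolding pKey_def using YK by simp
  have "closed_itemset G M I C"
    unfolding closed_itemset_def using CM eC by (simp add: C_def closure_def)
  hence "Y \<in> passkeys G M I" unfolding passkeys_def using YP by blast
  thus ?thesis using YP C_def by simp
qed

end
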